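(* The connective $\to$ is not definable in $\textsf{INQ}^-$: there is no formula $\varphi(a,b)$ of $\textsf{INQ}^-$ such that for all formulas $\eta,\theta$ of $\textsf{INQ}^-$, $\varphi(\eta,\theta)\equiv\eta\to\theta$ (where $\varphi(\eta,\theta)$ is obtained by replacing each occurrence of $a$ with $\eta$ and each occurrence of $b$ with $\theta$).
   Context: $\textsf{INQ}^-$ is the propositional language built from countably many propositional letters using $\bot,\top$, unary $\neg,?$ and binary $\land$, $\vee$ (inquisitive disjunction), $\otimes$ (tensor); it does not contain $\to$. A model is $M=(W,V)$ with $V$ assigning to each world a set of letters. Support at $s\subseteq W$: $s\models p$ iff $p\in V(w)$ for all $w\in s$; $s\models\bot$ iff $s=\emptyset$; $s\models\top$ always; $s\models\psi\land\chi$ iff both; $s\models\psi\vee\chi$ iff $s\models\psi$ or $s\models\chi$; $s\models\psi\otimes\chi$ iff $s=t_1\cup t_2$ for some $t_1\models\psi$, $t_2\models\chi$; $s\models\psi\to\chi$ iff for all $t\subseteq s$, $t\models\psi$ implies $t\models\chi$; $s\models\neg\psi$ iff $s\models\psi\to\bot$; $s\models?\psi$ iff $s\models\psi$ or $s\models\neg\psi$. $\psi\equiv\chi$ means that in every model, $\psi$ and $\chi$ are supported by the same states. *)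

theory Defs
  imports Main
begin

text \<open>Formulas of INQ (letters indexed by nat); INQ-minus = the Imp-free fragment.\<close>
datatype form =
    Atom nat
  | Bot
  | Top
  | Neg form
  | Ques form
  | Conj form form
  | IDisj form form
  | Tensor form form
  | Imp form form

fun imp_free :: "form \<Rightarrow> bool" where
  "imp_free (Atom p) = True"
| "imp_free Bot = True"
| "imp_free Top = True"
| "imp_free (Neg f) = imp_free f"
| "imp_free (Ques f) = imp_free f"
| "imp_free (Conj f g) = (imp_free f \<and> imp_free g)"
| "imp_free (IDisj f g) = (imp_free f \<and> imp_free g)"
| "imp_free (Tensor f g) = (imp_free f \<and> imp_free g)"
| "imp_free (Imp f g) = False"

fun supp :: "('w \<Rightarrow> nat set) \<Rightarrow> 'w set \<Rightarrow> form \<Rightarrow> bool" where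
  "supp V s (Atom p) = (\<forall>w\<in>s. p \<in> V w)"
| "supp V s Bot = (s = {})"
| "supp V s Top = True"
| "supp V s (Conj f g) = (supp V s f \<and> supp V s g)"
| "supp V s (IDisj f g) = (supp V s f \<or> supp V s g)"
| "supp V s (Tensor f g) = (\<exists>t1 t2. s = t1 \<union> t2 \<and> supp V t1 f \<and> supp V t2 g)"
| "supp V s (Imp f g) = (\<forall>t. t \<subseteq> s \<longrightarrow> supp V t f \<longrightarrow> supp V t g)"
| "supp V s (Neg f) = (\<forall>t. t \<subseteq> s \<longrightarrow> supp V t f \<longrightarrow> t = {})"
| "supp V s (Ques f) = (supp V s f \<or> (\<forall>t. t \<subseteq> s \<longrightarrow> supp V t f \<longrightarrow> t = {}))"

definition equiv_on :: "'w itself \<Rightarrow> form \<Rightarrow> form \<Rightarrow> bool" where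
  "equiv_on _ f g =
     (\<forall>(W::'w set) (V::'w \<Rightarrow> nat set) s. s \<subseteq> W \<longrightarrow> (supp V s f \<longleftrightarrow> supp V s g))"

fun subst2 :: "nat \<Rightarrow> nat \<Rightarrow> form \<Rightarrow> form \<Rightarrow> form \<Rightarrow> form" where
  "subst2 a b e t (Atom p) = (if p = a then e else if p = b then t else Atom p)"
| "subst2 a b e t Bot = Bot"
| "subst2 a b e t Top = Top"
| "subst2 a b e t (Neg f) = Neg (subst2 a b e t f)"
| "subst2 a b e t (Ques f) = Ques (subst2 a b e t f)"
| "subst2 a b e t (Conj f g) = Conj (subst2 a b e t f) (subst2 a b e t g)"
| "subst2 a b e t (IDisj f g) = IDisj (subst2 a b e t f) (subst2 a b e t g)"
| "subst2 a b e t (Tensor f g) = Tensor (subst2 a b e t f) (subst2 a b e t g)"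
| "subst2 a b e t (Imp f g) = Imp (subst2 a b e t f) (subst2 a b e t g)"

end

theory Submission
  imports Defs
begin

lemma arith_aux: "d + 2*d*(d+1) < (2::nat)^(2*d+2)"
proof (induction d)
  case 0 then show ?case by simp
next
  case (Suc d)
  define X :: nat where "X = 2^(2*d+2)"
  have e: "(2::nat)^(2*Suc d+2) = 4 * X" by (simp add: X_def power_add power_mult)
  have x: "d+1 \<le> X"
    using less_exp[of "2*d+2"] unfolding X_def by linarith
  have ih: "d + 2*(d*d) + 2*d < X" using Suc.IH unfolding X_def by (simp add: algebra_simps)
  have "Suc d + 2 * Suc d * (Suc d + 1) = d + 2*(d*d) + 2*d + (4*d + 5)" by (simp add: algebra_simps)
  moreover have "(4::nat) \<le> X" unfolding X_def using power_increasing[of 2 "2*d+2" "2::nat"] by simp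
  ultimately have "Suc d + 2 * Suc d * (Suc d + 1) < 4 * X" using ih by linarith
  then show ?case using e by simp
qed

lemma exists_m: "\<exists>m::nat. (m+4)^d < 2^m"
proof -
  define m :: nat where "m = 2^(2*d+2)"
  have m4: "4 \<le> m" unfolding m_def
    using power_increasing[of 2 "2*d+2" "2::nat"] by simp
  have "(m+4)^d \<le> (2*m)^d" using m4 by (intro power_mono) auto
  also have "\<dots> = 2^(d + (2*d+2)*d)" by (simp add: m_def power_mult_distrib power_add power_mult)
  also have "\<dots> < 2^m" unfolding m_def
    using arith_aux[of d] by (simp add: algebra_simps)
  finally show ?thesis by blast
qed

definition rep :: "('w \<Rightarrow> nat set) \<Rightarrow> form \<Rightarrow> nat \<Rightarrow> bool" where
  "rep V f k = (\<exists>F. finite F \<and> card F \<le> k \<and> (\<forall>s. supp V s f = (\<exists>a\<in>F. s \<subseteq> a)))"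

lemma rep_mono: assumes "rep V f k" "k \<le> k'" shows "rep V f k'"
proof -
  obtain F where F: "finite F" "card F \<le> k" "\<forall>s. supp V s f = (\<exists>a\<in>F. s \<subseteq> a)"
    using assms(1) unfolding rep_def by blast
  have "card F \<le> k'" using F(2) assms(2) by linarith
  then show ?thesis unfolding rep_def using F(1) F(3) by blast
qed

lemma rep_cong: assumes "\<forall>s. supp V s f = supp V s g" "rep V f k" shows "rep V g k"
proof -
  obtain F where F: "finite F" "card F \<le> k" "\<forall>s. supp V s f = (\<exists>a\<in>F. s \<subseteq> a)"
    using assms(2) unfolding rep_def by blast
  have "\<forall>s. supp V s g = (\<exists>a\<in>F. s \<subseteq> a)" using F(3) assms(1) by simp
  then show ?thesis unfolding rep_def using F(1,2) by blast
qed

lemma rep_atom: "rep V (Atom p) 1"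
  unfolding rep_def by (rule exI[of _ "{{w. p \<in> V w}}"]) auto

lemma rep_bot: "rep V Bot 1"
  unfolding rep_def by (rule exI[of _ "{{}}"]) auto

lemma rep_top: "rep V Top 1"
  unfolding rep_def by (rule exI[of _ "{UNIV}"]) auto

lemma rep_neg: assumes "rep V f k" shows "rep V (Neg f) 1"
proof -
  obtain F where F: "finite F" "\<forall>s. supp V s f = (\<exists>a\<in>F. s \<subseteq> a)"
    using assms unfolding rep_def by blast
  have "\<forall>s. supp V s (Neg f) = (\<exists>a\<in>{UNIV - \<Union>F}. s \<subseteq> a)"
  proof
    fix s
    show "supp V s (Neg f) = (\<exists>a\<in>{UNIV - \<Union>F}. s \<subseteq> a)"
    proof
      assume h: "supp V s (Neg f)"
      { fix w assume "w \<in> s" "w \<in> \<Union>F"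
        then obtain a where "a \<in> F" "{w} \<subseteq> a" by auto
        then have "supp V {w} f" using F by blast
        with h \<open>w \<in> s\<close> have False by auto }
      then show "\<exists>a\<in>{UNIV - \<Union>F}. s \<subseteq> a" by auto
    next
      assume "\<exists>a\<in>{UNIV - \<Union>F}. s \<subseteq> a"
      then have h: "s \<inter> \<Union>F = {}" by auto
      show "supp V s (Neg f)"
      proof (simp, intro allI impI)
        fix t assume "t \<subseteq> s" "supp V t f"
        then obtain a where "a \<in> F" "t \<subseteq> a" using F by blast
        then show "t = {}" using h \<open>t \<subseteq> s\<close> by blast
      qed
    qed
  qed
  then show ?thesis unfolding rep_def by (intro exI[of _ "{UNIV - \<Union>F}"]) auto
qed

lemma rep_ques: assumes "rep V f k" shows "rep V (Ques f) (k+1)"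
proof -
  obtain F where F: "finite F" "card F \<le> k" "\<forall>s. supp V s f = (\<exists>a\<in>F. s \<subseteq> a)"
    using assms unfolding rep_def by blast
  obtain G where G: "finite G" "card G \<le> 1" "\<forall>s. supp V s (Neg f) = (\<exists>a\<in>G. s \<subseteq> a)"
    using rep_neg[OF assms] unfolding rep_def by blast
  have "\<forall>s. supp V s (Ques f) = (\<exists>a\<in>F \<union> G. s \<subseteq> a)"
    using F(3) G(3) by (metis Un_iff supp.simps(8) supp.simps(9))
  moreover have "card (F \<union> G) \<le> k + 1"
    using card_Un_le[of F G] F G by linarith
  ultimately show ?thesis unfolding rep_def using F G by blast
qed

lemma rep_conj: assumes "rep V f k1" "rep V g k2" shows "rep V (Conj f g) (k1*k2)"
proof -
  obtain F where F: "finite F" "card F \<le> k1" "\<forall>s. supp V s f = (\<exists>a\<in>F. s \<subseteq> a)"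
    using assms unfolding rep_def by blast
  obtain G where G: "finite G" "card G \<le> k2" "\<forall>s. supp V s g = (\<exists>a\<in>G. s \<subseteq> a)"
    using assms unfolding rep_def by blast
  define H where "H = (\<lambda>(a,b). a \<inter> b) ` (F \<times> G)"
  have "finite H" using F G H_def by simp
  moreover have "card H \<le> k1*k2"
  proof -
    have "card H \<le> card (F \<times> G)" unfolding H_def by (rule card_image_le) (simp add: F G)
    also have "\<dots> = card F * card G" by (simp add: card_cartesian_product)
    also have "\<dots> \<le> k1*k2" using F G by (simp add: mult_le_mono)
    finally show ?thesis .
  qed
  moreover have "\<forall>s. supp V s (Conj f g) = (\<exists>a\<in>H. s \<subseteq> a)"
  proof
    fix s
    show "supp V s (Conj f g) = (\<exists>a\<in>H. s \<subseteq> a)"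
    proof
      assume "supp V s (Conj f g)"
      then obtain a b where ab: "a \<in> F" "s \<subseteq> a" "b \<in> G" "s \<subseteq> b"
        using F(3) G(3) by auto
      then have "a \<inter> b \<in> H" unfolding H_def by blast
      then show "\<exists>a\<in>H. s \<subseteq> a" using ab by blast
    next
      assume "\<exists>a\<in>H. s \<subseteq> a"
      then obtain c where c: "c \<in> H" "s \<subseteq> c" by blast
      then obtain a b where ab: "a \<in> F" "b \<in> G" "c = a \<inter> b" unfolding H_def by blast
      have "supp V s f" using F(3) ab c by blast
      moreover have "supp V s g" using G(3) ab c by blast
      ultimately show "supp V s (Conj f g)" by simp
    qed
  qed
  ultimately show ?thesis unfolding rep_def by blast
qed

lemma rep_tensor: assumes "rep V f k1" "rep V g k2" shows "rep V (Tensor f g) (k1*k2)"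
proof -
  obtain F where F: "finite F" "card F \<le> k1" "\<forall>s. supp V s f = (\<exists>a\<in>F. s \<subseteq> a)"
    using assms unfolding rep_def by blast
  obtain G where G: "finite G" "card G \<le> k2" "\<forall>s. supp V s g = (\<exists>a\<in>G. s \<subseteq> a)"
    using assms unfolding rep_def by blast
  define H where "H = (\<lambda>(a,b). a \<union> b) ` (F \<times> G)"
  have "finite H" using F G H_def by simp
  moreover have "card H \<le> k1*k2"
  proof -
    have "card H \<le> card (F \<times> G)" unfolding H_def by (rule card_image_le) (simp add: F G)
    also have "\<dots> = card F * card G" by (simp add: card_cartesian_product)
    also have "\<dots> \<le> k1*k2" using F G by (simp add: mult_le_mono)
    finally show ?thesis .
  qed
  moreover have "\<forall>s. supp V s (Tensor f g) = (\<exists>a\<in>H. s \<subseteq> a)"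
  proof
    fix s
    show "supp V s (Tensor f g) = (\<exists>a\<in>H. s \<subseteq> a)"
    proof
      assume "supp V s (Tensor f g)"
      then obtain t1 t2 a b where tt: "s = t1 \<union> t2" "a \<in> F" "t1 \<subseteq> a" "b \<in> G" "t2 \<subseteq> b"
        using F(3) G(3) by auto
      have ab: "a \<union> b \<in> H" unfolding H_def
        by (rule image_eqI[of _ _ "(a,b)"]) (use tt in auto)
      have "s \<subseteq> a \<union> b" using tt by auto
      then show "\<exists>a\<in>H. s \<subseteq> a" using ab by (rule_tac bexI)
    next
      assume "\<exists>a\<in>H. s \<subseteq> a"
      then obtain a b where ab: "a \<in> F" "b \<in> G" "s \<subseteq> a \<union> b" unfolding H_def by auto
      have "s = (s \<inter> a) \<union> (s - a)" by auto
      moreover have "supp V (s \<inter> a) f" using F(3) ab by blast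
      moreover have "supp V (s - a) g" using G(3) ab by blast
      ultimately show "supp V s (Tensor f g)" by (metis supp.simps(6))
    qed
  qed
  ultimately show ?thesis unfolding rep_def by blast
qed

lemma rep_ibigdisj: assumes "rep V f k1" "rep V g k2" shows "rep V (IDisj f g) (k1+k2)"
proof -
  obtain F where F: "finite F" "card F \<le> k1" "\<forall>s. supp V s f = (\<exists>a\<in>F. s \<subseteq> a)"
    using assms unfolding rep_def by blast
  obtain G where G: "finite G" "card G \<le> k2" "\<forall>s. supp V s g = (\<exists>a\<in>G. s \<subseteq> a)"
    using assms unfolding rep_def by blast
  have "\<forall>s. supp V s (IDisj f g) = (\<exists>a\<in>F \<union> G. s \<subseteq> a)"
    using F(3) G(3) by auto
  moreover have "card (F \<union> G) \<le> k1 + k2"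
    using card_Un_le[of F G] F G by linarith
  ultimately show ?thesis unfolding rep_def using F G by blast
qed

lemma pow_aux1: "(2::nat) \<le> x \<Longrightarrow> x^(a+1) + x^(b+1) \<le> x^(a+b+2)"
proof -
  assume x: "2 \<le> x"
  have "x^(a+1) \<le> x^(a+b+1)" using x by (intro power_increasing) auto
  moreover have "x^(b+1) \<le> x^(a+b+1)" using x by (intro power_increasing) auto
  moreover have "x^(a+b+2) = x * x^(a+b+1)" by simp
  moreover have "2 * x^(a+b+1) \<le> x * x^(a+b+1)" using x by simp
  ultimately show ?thesis by linarith
qed

lemma main_rep:
  assumes "rep V \<eta> m" "rep V \<theta> k" "2 \<le> m+k+1"
  shows "imp_free \<phi> \<Longrightarrow> rep V (subst2 a b \<eta> \<theta> \<phi>) ((m+k+1)^(size \<phi> + 1))"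
proof (induction \<phi>)
  case (Atom p)
  show ?case
  proof (cases "p = a")
    case True then show ?thesis using assms by (auto intro: rep_mono)
  next
    case False
    show ?thesis
    proof (cases "p = b")
      case True then show ?thesis using assms False by (auto intro: rep_mono)
    next
      case False2: False
      then show ?thesis using False rep_atom[of V p] by (auto intro: rep_mono)
    qed
  qed
next
  case Bot then show ?case using rep_bot[of V] by (auto intro: rep_mono)
next
  case Top then show ?case using rep_top[of V] by (auto intro: rep_mono)
next
  case (Neg f)
  then have "rep V (subst2 a b \<eta> \<theta> f) ((m+k+1)^(size f + 1))" by simp
  then have "rep V (Neg (subst2 a b \<eta> \<theta> f)) 1" by (rule rep_neg)
  moreover have "1 \<le> (m+k+1)^(size (Neg f) + 1)" by (rule one_le_power) simp
  ultimately have "rep V (Neg (subst2 a b \<eta> \<theta> f)) ((m+k+1)^(size (Neg f) + 1))" by (rule rep_mono)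
  then show ?case by simp
next
  case (Ques f)
  then have "rep V (Ques (subst2 a b \<eta> \<theta> f)) ((m+k+1)^(size f + 1) + 1)"
    using rep_ques by auto
  moreover have "(m+k+1)^(size f + 1) + 1 \<le> (m+k+1)^(size f + 1 + 1)"
  proof -
    have h: "(m+k+1)^(size f+1) + (m+k+1)^(0+1) \<le> (m+k+1)^(size f+0+2)"
      using assms(3) by (rule pow_aux1)
    have e1: "(m+k+1)^(size f+0+2) = (m+k+1)^(size f+1+1)" by simp
    have e2: "(m+k+1)^(0+1) = m+k+1" by simp
    show ?thesis using h e1 e2 by linarith
  qed
  ultimately show ?case by (auto intro: rep_mono)
next
  case (Conj f g)
  then have "rep V (Conj (subst2 a b \<eta> \<theta> f) (subst2 a b \<eta> \<theta> g)) ((m+k+1)^(size f + 1) * (m+k+1)^(size g + 1))"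
    using rep_conj by auto
  moreover have "(m+k+1)^(size f + 1) * (m+k+1)^(size g + 1) \<le> (m+k+1)^(size (Conj f g) + 1)"
  proof -
    have sz: "size (Conj f g) + 1 = (size f + 1) + (size g + 1)" by simp
    show ?thesis unfolding sz power_add by (rule le_refl)
  qed
  ultimately show ?case by (auto intro: rep_mono)
next
  case (Tensor f g)
  then have "rep V (Tensor (subst2 a b \<eta> \<theta> f) (subst2 a b \<eta> \<theta> g)) ((m+k+1)^(size f + 1) * (m+k+1)^(size g + 1))"
    using rep_tensor by auto
  moreover have "(m+k+1)^(size f + 1) * (m+k+1)^(size g + 1) \<le> (m+k+1)^(size (Tensor f g) + 1)"
  proof -
    have sz: "size (Tensor f g) + 1 = (size f + 1) + (size g + 1)" by simp
    show ?thesis unfolding sz power_add by (rule le_refl)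
  qed
  ultimately show ?case by (auto intro: rep_mono)
next
  case (IDisj f g)
  then have "rep V (IDisj (subst2 a b \<eta> \<theta> f) (subst2 a b \<eta> \<theta> g)) ((m+k+1)^(size f + 1) + (m+k+1)^(size g + 1))"
    using rep_ibigdisj by auto
  moreover have "(m+k+1)^(size f + 1) + (m+k+1)^(size g + 1) \<le> (m+k+1)^(size (IDisj f g) + 1)"
    using pow_aux1[of "m+k+1" "size f" "size g"] assms(3) by simp
  ultimately show ?case by (auto intro: rep_mono)
next
  case (Imp f g) then show ?case by simp
qed


fun bigdisj :: "nat \<Rightarrow> form" where
  "bigdisj 0 = Bot"
| "bigdisj (Suc i) = IDisj (bigdisj i) (Atom (Suc i))"

lemma bigdisj_free: "imp_free (bigdisj m)"
  by (induction m) auto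

lemma bigdisj_rep: "rep V (bigdisj m) (m+1)"
proof (induction m)
  case 0 then show ?case using rep_bot by simp
next
  case (Suc m) then show ?case using rep_ibigdisj[OF Suc rep_atom] by simp
qed

lemma bigdisj_supp: "supp V t (bigdisj m) = (t = {} \<or> (\<exists>j\<in>{1..m}. supp V t (Atom j)))"
proof (induction m)
  case 0 then show ?case by simp
next
  case (Suc m)
  have "supp V t (bigdisj (Suc m)) = (supp V t (bigdisj m) \<or> supp V t (Atom (Suc m)))" by simp
  also have "\<dots> = (t = {} \<or> (\<exists>j\<in>{1..Suc m}. supp V t (Atom j)))"
  proof -
    have "{1..Suc m} = insert (Suc m) {1..m}" by auto
    then show ?thesis using Suc by (auto simp del: supp.simps(1))
  qed
  finally show ?case .
qed

definition Vm :: "(nat \<Rightarrow> 'w) \<Rightarrow> 'w \<Rightarrow> nat set" where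
  "Vm g w = (if w \<in> range g then {inv g w div 2} \<union> (if odd (inv g w) then {0} else {}) else {})"

lemma Vm_g: "inj g \<Longrightarrow> Vm g (g n) = {n div 2} \<union> (if odd n then {0} else {})"
  unfolding Vm_def by simp

definition st :: "(nat \<Rightarrow> 'w) \<Rightarrow> nat \<Rightarrow> nat set \<Rightarrow> 'w set" where
  "st g m S = (\<lambda>i. g (2*i + (if i \<in> S then 1 else 0))) ` {1..m}"

lemma claimA:
  assumes g: "inj g"
  shows "supp (Vm g) (st g m S) (Imp (bigdisj m) (Ques (Atom 0)))"
proof (simp only: supp.simps(7), intro allI impI)
  fix t assume ts: "t \<subseteq> st g m S" and te: "supp (Vm g) t (bigdisj m)"
  show "supp (Vm g) t (Ques (Atom 0))"
  proof (cases "t = {}")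
    case True then show ?thesis by simp
  next
    case False
    then obtain j where j: "j \<in> {1..m}" "supp (Vm g) t (Atom j)"
      using te False unfolding bigdisj_supp by blast
    have sub: "t \<subseteq> {g (2*j + (if j \<in> S then 1 else 0))}"
    proof
      fix w assume w: "w \<in> t"
      then obtain i where i: "i \<in> {1..m}" "w = g (2*i + (if i \<in> S then 1 else 0))"
        using ts unfolding st_def by auto
      have "j \<in> Vm g w" using j w by simp
      then have "j = i" using i j Vm_g[OF g] by (auto split: if_splits)
      then show "w \<in> {g (2*j + (if j \<in> S then 1 else 0))}" using i by simp
    qed
    show ?thesis
    proof (cases "j \<in> S")
      case True
      then have "supp (Vm g) t (Atom 0)" using sub Vm_g[OF g] by auto
      then show ?thesis by simp
    next
      case False
      have "\<forall>t'. t' \<subseteq> t \<longrightarrow> supp (Vm g) t' (Atom 0) \<longrightarrow> t' = {}"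
      proof (intro allI impI)
        fix t' assume "t' \<subseteq> t" "supp (Vm g) t' (Atom 0)"
        then show "t' = {}" using sub False Vm_g[OF g, of "2*j"] j(1) by fastforce
      qed
      then show ?thesis by simp
    qed
  qed
qed

lemma claimB:
  assumes g: "inj g" and S: "S \<subseteq> {1..m}" "S' \<subseteq> {1..m}" "S \<noteq> S'"
  shows "\<not> supp (Vm g) (st g m S \<union> st g m S') (Imp (bigdisj m) (Ques (Atom 0)))"
proof
  assume h: "supp (Vm g) (st g m S \<union> st g m S') (Imp (bigdisj m) (Ques (Atom 0)))"
  obtain i where i: "i \<in> {1..m}" "(i \<in> S) \<noteq> (i \<in> S')" using S by blast
  define t where "t = {g (2*i), g (2*i+1)}"
  have "t \<subseteq> st g m S \<union> st g m S'" unfolding t_def st_def using i by auto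
  moreover have "supp (Vm g) t (bigdisj m)"
    unfolding bigdisj_supp using i Vm_g[OF g, of "2*i"] Vm_g[OF g, of "2*i+1"] by (auto simp: t_def)
  ultimately have q: "supp (Vm g) t (Ques (Atom 0))" using h by simp
  have n1: "\<not> supp (Vm g) t (Atom 0)" using i Vm_g[OF g, of "2*i"] by (auto simp: t_def)
  have "{g (2*i+1)} \<subseteq> t" "supp (Vm g) {g (2*i+1)} (Atom 0)"
    using Vm_g[OF g, of "2*i+1"] by (auto simp: t_def)
  then show False using q n1 by auto
qed

lemma lower:
  assumes g: "inj g" and r: "rep (Vm g) (Imp (bigdisj m) (Ques (Atom 0))) K"
  shows "2^m \<le> K"
proof -
  obtain F where F: "finite F" "card F \<le> K"
    "\<forall>s. supp (Vm g) s (Imp (bigdisj m) (Ques (Atom 0))) = (\<exists>a\<in>F. s \<subseteq> a)"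
    using r unfolding rep_def by blast
  have "\<forall>S. \<exists>a. S \<subseteq> {1..m} \<longrightarrow> a \<in> F \<and> st g m S \<subseteq> a"
    using claimA[OF g] F(3) by blast
  then obtain A where A: "\<And>S. S \<subseteq> {1..m} \<Longrightarrow> A S \<in> F \<and> st g m S \<subseteq> A S" by metis
  have "inj_on A (Pow {1..m})"
  proof (rule inj_onI)
    fix S S' assume "S \<in> Pow {1..m}" "S' \<in> Pow {1..m}" "A S = A S'"
    then have "supp (Vm g) (st g m S \<union> st g m S') (Imp (bigdisj m) (Ques (Atom 0)))"
      using A[of S] A[of S'] F(3) by (metis PowD Un_least)
    then show "S = S'" using claimB[OF g] \<open>S \<in> Pow {1..m}\<close> \<open>S' \<in> Pow {1..m}\<close> by blast
  qed
  moreover have "A ` Pow {1..m} \<subseteq> F" using A by auto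
  ultimately have "card (Pow {1..m}) \<le> card F" using card_inj_on_le F(1) by blast
  then show ?thesis using F(2) by (simp add: card_Pow)
qed

theorem theorem3:
  assumes "infinite (UNIV :: 'w set)"
  shows "\<not> (\<exists>\<phi> a b. a \<noteq> b \<and> imp_free \<phi> \<and>
            (\<forall>\<eta> \<theta>. imp_free \<eta> \<and> imp_free \<theta> \<longrightarrow>
                equiv_on TYPE('w) (subst2 a b \<eta> \<theta> \<phi>) (Imp \<eta> \<theta>)))"
proof
  assume "\<exists>\<phi> a b. a \<noteq> b \<and> imp_free \<phi> \<and>
            (\<forall>\<eta> \<theta>. imp_free \<eta> \<and> imp_free \<theta> \<longrightarrow>
                equiv_on TYPE('w) (subst2 a b \<eta> \<theta> \<phi>) (Imp \<eta> \<theta>))"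
  then obtain \<phi> a b where phi: "imp_free \<phi>" and
    eq: "\<And>\<eta> \<theta>. imp_free \<eta> \<Longrightarrow> imp_free \<theta> \<Longrightarrow>
                equiv_on TYPE('w) (subst2 a b \<eta> \<theta> \<phi>) (Imp \<eta> \<theta>)" by blast
  obtain g :: "nat \<Rightarrow> 'w" where g: "inj g"
    using infinite_iff_countable_subset[of "UNIV :: 'w set", THEN iffD1, OF assms] by blast
  obtain m :: nat where m: "(m+4)^(size \<phi> + 1) < 2^m" using exists_m by blast
  let ?V = "Vm g"
  have e: "equiv_on TYPE('w) (subst2 a b (bigdisj m) (Ques (Atom 0)) \<phi>) (Imp (bigdisj m) (Ques (Atom 0)))"
    by (rule eq) (auto simp: bigdisj_free)
  then have e2: "\<forall>s. supp ?V s (subst2 a b (bigdisj m) (Ques (Atom 0)) \<phi>) = supp ?V s (Imp (bigdisj m) (Ques (Atom 0)))"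
    unfolding equiv_on_def by blast
  have rq: "rep ?V (Ques (Atom 0)) 2" using rep_ques[OF rep_atom, of ?V 0] by (simp add: numeral_2_eq_2)
  have "rep ?V (subst2 a b (bigdisj m) (Ques (Atom 0)) \<phi>) ((m+1+2+1)^(size \<phi> + 1))"
    by (rule main_rep[OF bigdisj_rep rq _ phi]) simp
  moreover have "m+1+2+1 = m+4" by simp
  ultimately have "rep ?V (subst2 a b (bigdisj m) (Ques (Atom 0)) \<phi>) ((m+4)^(size \<phi> + 1))"
    by metis
  then have "rep ?V (Imp (bigdisj m) (Ques (Atom 0))) ((m+4)^(size \<phi> + 1))"
    by (rule rep_cong[OF e2])
  then have "2^m \<le> (m+4)^(size \<phi> + 1)" by (rule lower[OF g])
  then show False using m by simp
qed

end
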